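(* Let $q$ be a prime power and $d\ge 2q-1$ an integer. Let $R_d$ be the set of homogeneous polynomials of degree $d$ in $\mathbb{F}_q[x,y,z]$ (including $0$), and for $f\in R_d$ let $\#C_f(\mathbb{F}_q)$ denote the number of points of $\mathbb{P}^2(\mathbb{F}_q)$ at which $f$ vanishes. Let $B_1,\dots,B_{q^2+q+1}$ be independent identically distributed Bernoulli random variables taking the value $1$ with probability $1/q$. Then for every integer $n$, $$\frac{\#\{f\in R_d:\#C_f(\mathbb{F}_q)=n\}}{\#R_d}=\mathrm{Prob}(B_1+\dots+B_{q^2+q+1}=n).$$ *)

theory Defs
  imports "HOL-Probability.Probability"
begin

definition deg_monos :: "nat \<Rightarrow> (nat \<times> nat \<times> nat) set" where
  "deg_monos d = {(i, j, k). i + j + k = d}"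

text \<open>A polynomial in F[x,y,z] is represented by its coefficient function on exponent
  triples.\<close>
definition hom_polys :: "nat \<Rightarrow> ((nat \<times> nat \<times> nat) \<Rightarrow> 'a::{field,finite}) set" where
  "hom_polys d = {f. \<forall>m. f m \<noteq> 0 \<longrightarrow> m \<in> deg_monos d}"

definition poly_eval :: "nat \<Rightarrow> ((nat \<times> nat \<times> nat) \<Rightarrow> 'a::{field,finite}) \<Rightarrow> 'a \<times> 'a \<times> 'a \<Rightarrow> 'a" where
  "poly_eval d f = (\<lambda>(x, y, z). \<Sum>(i, j, k)\<in>deg_monos d. f (i, j, k) * x ^ i * y ^ j * z ^ k)"

definition proj_points :: "('a::{field,finite} \<times> 'a \<times> 'a) set set" where
  "proj_points = {{(c * x, c * y, c * z) | c. c \<noteq> 0} | x y z. (x, y, z) \<noteq> (0, 0, 0)}"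

definition num_points :: "nat \<Rightarrow> ((nat \<times> nat \<times> nat) \<Rightarrow> 'a::{field,finite}) \<Rightarrow> nat" where
  "num_points d f = card {P \<in> proj_points. \<forall>v\<in>P. poly_eval d f v = 0}"

end

theory Submission
  imports Defs
begin



lemma ff_pow_card_minus1:
  fixes x :: "'a::{field,finite}"
  assumes "x \<noteq> 0"
  shows "x ^ (CARD('a) - 1) = 1"
proof -
  let ?U = "UNIV - {0::'a}"
  have inj: "inj_on (\<lambda>y. x * y) ?U" using assms by (auto simp: inj_on_def)
  have img: "(\<lambda>y. x * y) ` ?U = ?U"
  proof
    show "(\<lambda>y. x * y) ` ?U \<subseteq> ?U" using assms by auto
    show "?U \<subseteq> (\<lambda>y. x * y) ` ?U"
    proof
      fix y assume "y \<in> ?U"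
      then have "y = x * (y / x)" "y / x \<in> ?U" using assms by auto
      then show "y \<in> (\<lambda>y. x * y) ` ?U" by blast
    qed
  qed
  have "prod id ?U = prod id ((\<lambda>y. x * y) ` ?U)" using img by simp
  also have "\<dots> = prod (\<lambda>y. x * y) ?U" using prod.reindex[OF inj, of id] by simp
  also have "\<dots> = x ^ card ?U * prod id ?U" by (simp add: prod.distrib)
  finally have e: "prod id ?U = x ^ card ?U * prod id ?U" .
  have nz: "prod id ?U \<noteq> 0" by (simp add: prod_zero_iff)
  have "x ^ card ?U = 1" using e nz by (metis mult_cancel_right1)
  moreover have "card ?U = CARD('a) - 1" by (simp add: card_Diff_singleton)
  ultimately show ?thesis by simp
qed

lemma card_ge2: "CARD('a::{field,finite}) \<ge> 2"
proof -
  have "{0::'a, 1} \<subseteq> UNIV" by simp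
  then have "card {0::'a,1} \<le> CARD('a)" by (intro card_mono) auto
  then show ?thesis by simp
qed

lemma pow_q1:
  fixes t :: "'a::{field,finite}"
  shows "t ^ (CARD('a) - 1) = (if t = 0 then 0 else 1)"
  using ff_pow_card_minus1[of t] card_ge2[where 'a='a] by auto


lemma finite_deg_monos: "finite (deg_monos d)"
proof -
  have "deg_monos d \<subseteq> {..d} \<times> {..d} \<times> {..d}" by (auto simp: deg_monos_def)
  then show ?thesis by (rule finite_subset) auto
qed

definition mon :: "nat \<times> nat \<times> nat \<Rightarrow> 'a::{field,finite} \<times> 'a \<times> 'a \<Rightarrow> 'a" where
  "mon m v = (case m of (i,j,k) \<Rightarrow> case v of (x,y,z) \<Rightarrow> x^i * y^j * z^k)"

lemma poly_eval_alt: "poly_eval d f v = (\<Sum>m\<in>deg_monos d. f m * mon m v)"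
  unfolding poly_eval_def mon_def
  by (cases v) (auto intro!: sum.cong simp: mult.assoc split: prod.splits)

definition EV :: "nat \<Rightarrow> ('a::{field,finite} \<times> 'a \<times> 'a \<Rightarrow> 'a) set" where
  "EV d = poly_eval d ` hom_polys d"

lemma EV_expand:
  assumes "g \<in> EV d"
  obtains f where "f \<in> hom_polys d" "g = (\<lambda>v. \<Sum>m\<in>deg_monos d. f m * mon m v)"
  using assms unfolding EV_def by (auto simp: poly_eval_alt[abs_def])

lemma EV_intro:
  assumes "f \<in> hom_polys d" "g = (\<lambda>v. \<Sum>m\<in>deg_monos d. f m * mon m v)"
  shows "g \<in> EV d"
  using assms unfolding EV_def by (auto simp: poly_eval_alt[abs_def])

lemma EV_lin:
  assumes "g \<in> EV d" "h \<in> EV d"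
  shows "(\<lambda>v. a * g v + b * h v) \<in> EV d"
proof -
  obtain f1 where f1: "f1 \<in> hom_polys d" "g = (\<lambda>v. \<Sum>m\<in>deg_monos d. f1 m * mon m v)"
    using assms(1) by (rule EV_expand)
  obtain f2 where f2: "f2 \<in> hom_polys d" "h = (\<lambda>v. \<Sum>m\<in>deg_monos d. f2 m * mon m v)"
    using assms(2) by (rule EV_expand)
  show ?thesis
  proof (rule EV_intro[of "\<lambda>m. a * f1 m + b * f2 m"])
    show "(\<lambda>m. a * f1 m + b * f2 m) \<in> hom_polys d"
      unfolding hom_polys_def
    proof (intro CollectI allI impI)
      fix m assume "a * f1 m + b * f2 m \<noteq> 0"
      then have "f1 m \<noteq> 0 \<or> f2 m \<noteq> 0" by auto
      then show "m \<in> deg_monos d" using f1(1) f2(1) unfolding hom_polys_def by blast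
    qed
    show "(\<lambda>v. a * g v + b * h v) = (\<lambda>v. \<Sum>m\<in>deg_monos d. (a * f1 m + b * f2 m) * mon m v)"
      by (simp add: f1(2) f2(2) sum_distrib_left sum.distrib algebra_simps)
  qed
qed

lemma EV_zero: "(\<lambda>_. 0) \<in> EV d"
  by (rule EV_intro[of "\<lambda>_. 0"]) (auto simp: hom_polys_def)

lemma EV_add: "g \<in> EV d \<Longrightarrow> h \<in> EV d \<Longrightarrow> (\<lambda>v. g v + h v) \<in> EV d"
  using EV_lin[of g d h 1 1] by simp

lemma EV_diff: "g \<in> EV d \<Longrightarrow> h \<in> EV d \<Longrightarrow> (\<lambda>v. g v - h v) \<in> EV d"
  using EV_lin[of g d h 1 "-1"] by simp

lemma EV_scale: "g \<in> EV d \<Longrightarrow> (\<lambda>v. a * g v) \<in> EV d"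
  using EV_lin[of g d g a 0] by simp

lemma EV_sum: "finite S \<Longrightarrow> (\<And>s. s \<in> S \<Longrightarrow> g s \<in> EV d) \<Longrightarrow> (\<lambda>v. \<Sum>s\<in>S. g s v) \<in> EV d"
proof (induction S rule: finite_induct)
  case empty then show ?case by (simp add: EV_zero)
next
  case (insert x F)
  then show ?case using EV_add[of "g x" d "\<lambda>v. \<Sum>s\<in>F. g s v"] by simp
qed

lemma EV_mon:
  assumes d: "i + j + k = d"
  shows "mon (i,j,k) \<in> EV d"
proof -
  have hp: "(\<lambda>m. if m = (i,j,k) then (1::'a) else 0) \<in> hom_polys d"
    using d by (auto simp: hom_polys_def deg_monos_def)
  have eq: "mon (i,j,k) = (\<lambda>v. \<Sum>m\<in>deg_monos d. (if m = (i,j,k) then (1::'a) else 0) * mon m v)"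
  proof (rule ext)
    fix v :: "'a \<times> 'a \<times> 'a"
    have "(\<Sum>m\<in>deg_monos d. (if m = (i,j,k) then 1 else 0) * mon m v)
        = (\<Sum>m\<in>deg_monos d. (if m = (i,j,k) then mon m v else 0))"
      by (rule sum.cong) auto
    also have "\<dots> = mon (i,j,k) v"
      using d finite_deg_monos[of d] by (simp add: sum.delta' deg_monos_def)
    finally show "mon (i,j,k) v = (\<Sum>m\<in>deg_monos d. (if m = (i,j,k) then 1 else 0) * mon m v)" by simp
  qed
  show ?thesis by (rule EV_intro[OF hp eq])
qed

lemma mon_mult: "mon (i,j,k) v * mon (i',j',k') v = mon (i+i', j+j', k+k') v"
  by (cases v) (simp add: mon_def power_add algebra_simps)

lemma EV_mon_mult:
  assumes "m \<in> deg_monos a" "h \<in> EV b"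
  shows "(\<lambda>v. mon m v * h v) \<in> EV (a + b)"
proof -
  obtain f where f: "f \<in> hom_polys b" "h = (\<lambda>v. \<Sum>m\<in>deg_monos b. f m * mon m v)"
    using assms(2) by (rule EV_expand)
  obtain i j k where m: "m = (i,j,k)" "i + j + k = a" using assms(1) by (auto simp: deg_monos_def)
  have each: "(\<lambda>v. f m' * (mon m v * mon m' v)) \<in> EV (a + b)" if mb: "m' \<in> deg_monos b" for m'
  proof -
    obtain i' j' k' where m': "m' = (i',j',k')" "i' + j' + k' = b" using mb by (cases m') (auto simp: deg_monos_def)
    have e: "(\<lambda>v. mon m v * mon m' v) = mon (i+i', j+j', k+k')"
      by (rule ext) (simp add: m m' mon_mult)
    have "i + i' + (j + j') + (k + k') = a + b" using m(2) m'(2) by simp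
    then have "mon (i+i', j+j', k+k') \<in> EV (a + b)" by (rule EV_mon)
    then have "(\<lambda>v. mon m v * mon m' v) \<in> EV (a + b)" unfolding e .
    then show ?thesis by (rule EV_scale)
  qed
  have eq: "(\<lambda>v. mon m v * h v) = (\<lambda>v. \<Sum>m'\<in>deg_monos b. f m' * (mon m v * mon m' v))"
    by (rule ext) (simp add: f(2) sum_distrib_left ac_simps)
  show ?thesis unfolding eq
    using EV_sum[OF finite_deg_monos, of b "\<lambda>m' v. f m' * (mon m v * mon m' v)"] each by blast
qed

lemma EV_mult:
  assumes "g \<in> EV a" "h \<in> EV b"
  shows "(\<lambda>v. g v * h v) \<in> EV (a + b)"
proof -
  obtain f where f: "f \<in> hom_polys a" "g = (\<lambda>v. \<Sum>m\<in>deg_monos a. f m * mon m v)"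
    using assms(1) by (rule EV_expand)
  have each: "(\<lambda>v. f m * (mon m v * h v)) \<in> EV (a + b)" if "m \<in> deg_monos a" for m
    using EV_mon_mult[OF that assms(2)] by (rule EV_scale)
  have eq: "(\<lambda>v. g v * h v) = (\<lambda>v. \<Sum>m\<in>deg_monos a. f m * (mon m v * h v))"
    by (rule ext) (simp add: f(2) sum_distrib_left sum_distrib_right ac_simps)
  show ?thesis unfolding eq
    using EV_sum[OF finite_deg_monos, of a "\<lambda>m v. f m * (mon m v * h v)"] each by blast
qed

lemma EV_one: "(\<lambda>_. 1) \<in> (EV 0 :: ('a::{field,finite}\<times>'a\<times>'a \<Rightarrow> 'a) set)"
proof -
  have e: "mon (0,0,0) = (\<lambda>_::'a\<times>'a\<times>'a. 1::'a)" by (rule ext) (simp add: mon_def split: prod.split)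
  have "mon (0,0,0) \<in> (EV 0 :: ('a\<times>'a\<times>'a \<Rightarrow> 'a) set)" by (rule EV_mon) simp
  then show ?thesis unfolding e .
qed

lemma EV_pow: "g \<in> EV a \<Longrightarrow> (\<lambda>v. g v ^ n) \<in> EV (a * n)"
proof (induction n)
  case 0 then show ?case using EV_one by simp
next
  case (Suc n)
  then show ?case using EV_mult[OF Suc.prems Suc.IH[OF Suc.prems]] by (simp add: add.commute)
qed

lemma EV_X: "(\<lambda>v. fst v) \<in> (EV 1 :: ('a::{field,finite}\<times>'a\<times>'a \<Rightarrow> 'a) set)"
proof -
  have e: "mon (1,0,0) = (\<lambda>v::'a\<times>'a\<times>'a. fst v)" by (rule ext) (simp add: mon_def split: prod.split)
  have "mon (1,0,0) \<in> (EV 1 :: ('a\<times>'a\<times>'a \<Rightarrow> 'a) set)" by (rule EV_mon) simp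
  then show ?thesis unfolding e .
qed
lemma EV_Y: "(\<lambda>v. fst (snd v)) \<in> (EV 1 :: ('a::{field,finite}\<times>'a\<times>'a \<Rightarrow> 'a) set)"
proof -
  have e: "mon (0,1,0) = (\<lambda>v::'a\<times>'a\<times>'a. fst (snd v))" by (rule ext) (simp add: mon_def split: prod.split)
  have "mon (0,1,0) \<in> (EV 1 :: ('a\<times>'a\<times>'a \<Rightarrow> 'a) set)" by (rule EV_mon) simp
  then show ?thesis unfolding e .
qed
lemma EV_Z: "(\<lambda>v. snd (snd v)) \<in> (EV 1 :: ('a::{field,finite}\<times>'a\<times>'a \<Rightarrow> 'a) set)"
proof -
  have e: "mon (0,0,1) = (\<lambda>v::'a\<times>'a\<times>'a. snd (snd v))" by (rule ext) (simp add: mon_def split: prod.split)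
  have "mon (0,0,1) \<in> (EV 1 :: ('a\<times>'a\<times>'a \<Rightarrow> 'a) set)" by (rule EV_mon) simp
  then show ?thesis unfolding e .
qed




definition Reps :: "('a::{field,finite} \<times> 'a \<times> 'a) set" where
  "Reps = {(1,y,z) | y z. True} \<union> {(0,1,z) | z. True} \<union> {(0,0,1)}"

definition Hf :: "nat \<Rightarrow> ('a::{field,finite} \<times> 'a \<times> 'a \<Rightarrow> 'a) \<Rightarrow> ('a \<times> 'a \<times> 'a \<Rightarrow> 'a)
   \<Rightarrow> ('a \<times> 'a \<times> 'a \<Rightarrow> 'a) \<Rightarrow> 'a \<times> 'a \<times> 'a \<Rightarrow> 'a" where
  "Hf e L0 L1 L2 v = L0 v ^ e * (L0 v ^ (CARD('a) - 1) - L1 v ^ (CARD('a) - 1))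
      * (L0 v ^ (CARD('a) - 1) - L2 v ^ (CARD('a) - 1))"

lemma EV_Hf:
  fixes L0 L1 L2 :: "'a::{field,finite} \<times> 'a \<times> 'a \<Rightarrow> 'a"
  assumes "L0 \<in> EV 1" "L1 \<in> EV 1" "L2 \<in> EV 1"
  shows "Hf e L0 L1 L2 \<in> EV (e + (CARD('a) - 1) + (CARD('a) - 1))"
proof -
  let ?p = "CARD('a) - 1"
  have a: "(\<lambda>v. L0 v ^ e) \<in> EV e" using EV_pow[OF assms(1), of e] by simp
  have b0: "(\<lambda>v. L0 v ^ ?p) \<in> EV ?p" using EV_pow[OF assms(1), of ?p] by simp
  have b1: "(\<lambda>v. L1 v ^ ?p) \<in> EV ?p" using EV_pow[OF assms(2), of ?p] by simp
  have b2: "(\<lambda>v. L2 v ^ ?p) \<in> EV ?p" using EV_pow[OF assms(3), of ?p] by simp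
  have c1: "(\<lambda>v. L0 v ^ ?p - L1 v ^ ?p) \<in> EV ?p" by (rule EV_diff[OF b0 b1])
  have c2: "(\<lambda>v. L0 v ^ ?p - L2 v ^ ?p) \<in> EV ?p" by (rule EV_diff[OF b0 b2])
  have "(\<lambda>v. L0 v ^ e * (L0 v ^ ?p - L1 v ^ ?p)) \<in> EV (e + ?p)" by (rule EV_mult[OF a c1])
  from EV_mult[OF this c2] show ?thesis unfolding Hf_def[abs_def] by simp
qed

definition hdel :: "nat \<Rightarrow> 'a::{field,finite} \<times> 'a \<times> 'a \<Rightarrow> 'a \<times> 'a \<times> 'a \<Rightarrow> 'a" where
  "hdel e r = (if fst r \<noteq> 0 then
       Hf e (\<lambda>v. fst v) (\<lambda>v. fst (snd v) - fst (snd r) * fst v) (\<lambda>v. snd (snd v) - snd (snd r) * fst v)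
     else if fst (snd r) \<noteq> 0 then
       Hf e (\<lambda>v. fst (snd v)) (\<lambda>v. fst v) (\<lambda>v. snd (snd v) - snd (snd r) * fst (snd v))
     else Hf e (\<lambda>v. snd (snd v)) (\<lambda>v. fst v) (\<lambda>v. fst (snd v)))"

lemma EV_lin1: "L \<in> EV 1 \<Longrightarrow> M \<in> EV 1 \<Longrightarrow> (\<lambda>v. L v - c * M v) \<in> EV 1"
  by (rule EV_diff) (auto intro: EV_scale)

lemma hdel_EV:
  assumes "d \<ge> 2 * CARD('a::{field,finite}) - 1"
  shows "hdel (d - 2 * (CARD('a) - 1)) (r :: 'a \<times> 'a \<times> 'a) \<in> EV d"
proof -
  let ?e = "d - 2 * (CARD('a) - 1)"
  have dd: "?e + (CARD('a) - 1) + (CARD('a) - 1) = d" using assms card_ge2[where 'a='a] by simp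
  have h1: "Hf ?e (\<lambda>v. fst v) (\<lambda>v. fst (snd v) - fst (snd r) * fst v) (\<lambda>v. snd (snd v) - snd (snd r) * fst v)
     \<in> EV (?e + (CARD('a) - 1) + (CARD('a) - 1))"
    by (intro EV_Hf EV_lin1 EV_X EV_Y EV_Z)
  have h2: "Hf ?e (\<lambda>v. fst (snd v)) (\<lambda>v. fst v) (\<lambda>v. snd (snd v) - snd (snd r) * fst (snd v))
     \<in> EV (?e + (CARD('a) - 1) + (CARD('a) - 1))"
    by (intro EV_Hf EV_lin1 EV_X EV_Y EV_Z)
  have h3: "Hf ?e (\<lambda>v::'a\<times>'a\<times>'a. snd (snd v)) (\<lambda>v. fst v) (\<lambda>v. fst (snd v))
     \<in> EV (?e + (CARD('a) - 1) + (CARD('a) - 1))"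
    by (rule EV_Hf[OF EV_Z EV_X EV_Y])
  show ?thesis using h1 h2 h3 unfolding dd hdel_def by simp
qed

lemma Reps_cases:
  assumes "r \<in> Reps"
  obtains a b where "r = (1,a,b)" | c where "r = (0,1,c)" | "r = (0,0,1)"
  using assms unfolding Reps_def by blast

lemma pow_q1':
  fixes t :: "'a::{field,finite}"
  shows "t ^ (CARD('a) - Suc 0) = (if t = 0 then 0 else 1)"
  using pow_q1[of t] by simp

lemma hdel_val:
  assumes "r \<in> Reps" "r' \<in> Reps" "e \<ge> 1"
  shows "hdel e r r' = (if r' = r then 1 else (0::'a::{field,finite}))"
proof -
  have z: "(0::'a) ^ e = 0" using assms(3) by simp
  have ep: "0 < e" using assms(3) by simp
  show ?thesis
    using assms(1)
  proof (cases rule: Reps_cases)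
    case (1 a b)
    show ?thesis using assms(2)
      by (cases rule: Reps_cases) (auto simp: 1 hdel_def Hf_def pow_q1 pow_q1' z ep)
  next
    case (2 c)
    show ?thesis using assms(2)
      by (cases rule: Reps_cases) (auto simp: 2 hdel_def Hf_def pow_q1 pow_q1' z ep)
  next
    case 3
    show ?thesis using assms(2)
      by (cases rule: Reps_cases) (auto simp: 3 hdel_def Hf_def pow_q1 pow_q1' z ep)
  qed
qed




lemma poly_eval_hom:
  "poly_eval d f (c * x, c * y, c * z) = c ^ d * poly_eval d f (x, y, z)"
proof -
  have "mon m (c * x, c * y, c * z) = c ^ d * mon m (x, y, z)" if mm: "m \<in> deg_monos d" for m
  proof -
    obtain i j k where m: "m = (i,j,k)" "i + j + k = d" using mm by (cases m) (auto simp: deg_monos_def)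
    have "mon m (c * x, c * y, c * z) = c ^ (i + j + k) * mon m (x, y, z)"
      by (simp add: m mon_def power_mult_distrib power_add ac_simps)
    then show ?thesis using m by simp
  qed
  then show ?thesis
    by (simp add: poly_eval_alt sum_distrib_left ac_simps cong: sum.cong)
qed

definition cls :: "'a::{field,finite} \<times> 'a \<times> 'a \<Rightarrow> ('a \<times> 'a \<times> 'a) set" where
  "cls v = (case v of (x,y,z) \<Rightarrow> {(c * x, c * y, c * z) | c. c \<noteq> 0})"

lemma proj_points_cls: "proj_points = {cls (x,y,z) | x y z. (x,y,z) \<noteq> (0,0,0)}"
  unfolding proj_points_def cls_def by simp

lemma cls_scale:
  assumes "a \<noteq> 0"
  shows "cls (a * x, a * y, a * z) = cls (x, y, z)"
proof
  show "cls (a * x, a * y, a * z) \<subseteq> cls (x, y, z)"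
  proof
    fix v assume "v \<in> cls (a * x, a * y, a * z)"
    then obtain c where "c \<noteq> 0" "v = (c * (a * x), c * (a * y), c * (a * z))" by (auto simp: cls_def)
    then have "c * a \<noteq> 0" "v = ((c * a) * x, (c * a) * y, (c * a) * z)" using assms by (auto simp: ac_simps)
    then show "v \<in> cls (x, y, z)" unfolding cls_def by blast
  qed
  show "cls (x, y, z) \<subseteq> cls (a * x, a * y, a * z)"
  proof
    fix v assume "v \<in> cls (x, y, z)"
    then obtain c where "c \<noteq> 0" "v = (c * x, c * y, c * z)" by (auto simp: cls_def)
    then have "c / a \<noteq> 0" "v = ((c / a) * (a * x), (c / a) * (a * y), (c / a) * (a * z))" using assms by auto
    then show "v \<in> cls (a * x, a * y, a * z)" unfolding cls_def by blast
  qed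
qed

lemma self_in_cls: "(x, y, z) \<in> cls (x, y, z)"
  unfolding cls_def by (auto intro!: exI[of _ 1])

lemma Reps_nz: "r \<in> Reps \<Longrightarrow> r \<noteq> (0,0,0)"
  by (auto simp: Reps_def)

lemma normalize_rep:
  assumes "(x, y, z) \<noteq> ((0::'a::{field,finite}), 0, 0)"
  shows "\<exists>r\<in>Reps. cls (x, y, z) = cls r"
proof (cases "x \<noteq> 0")
  case True
  have "cls (x, y, z) = cls (x * 1, x * (y / x), x * (z / x))" using True by simp
  also have "\<dots> = cls (1, y / x, z / x)" by (rule cls_scale[OF True])
  finally show ?thesis unfolding Reps_def by blast
next
  case False
  show ?thesis
  proof (cases "y \<noteq> 0")
    case True
    have "cls (x, y, z) = cls (y * 0, y * 1, y * (z / y))" using True False by simp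
    also have "\<dots> = cls (0, 1, z / y)" by (rule cls_scale[OF True])
    finally show ?thesis unfolding Reps_def by blast
  next
    case F2: False
    then have zz: "z \<noteq> 0" using False assms by auto
    have "cls (x, y, z) = cls (z * 0, z * 0, z * 1)" using zz False F2 by simp
    also have "\<dots> = cls (0, 0, 1)" by (rule cls_scale[OF zz])
    finally show ?thesis unfolding Reps_def by blast
  qed
qed

lemma cls_inj:
  assumes "r \<in> Reps" "r' \<in> Reps" "cls r = cls r'"
  shows "r = r'"
proof -
  obtain x y z where r: "r = (x, y, z)" by (cases r)
  obtain x' y' z' where r': "r' = (x', y', z')" by (cases r')
  have "r' \<in> cls r" using assms(3) self_in_cls[of x' y' z'] r' by simp
  then obtain c where c: "c \<noteq> 0" "x' = c * x" "y' = c * y" "z' = c * z"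
    unfolding r r' cls_def by auto
  show ?thesis
    using assms(1)
  proof (cases rule: Reps_cases)
    case (1 a b)
    show ?thesis using assms(2) by (cases rule: Reps_cases) (use 1 c r r' in auto)
  next
    case (2 a)
    show ?thesis using assms(2) by (cases rule: Reps_cases) (use 2 c r r' in auto)
  next
    case 3
    show ?thesis using assms(2) by (cases rule: Reps_cases) (use 3 c r r' in auto)
  qed
qed

lemma zero_on_cls:
  "(\<forall>v\<in>cls (x, y, z). poly_eval d f v = 0) \<longleftrightarrow> poly_eval d f (x, y, z) = 0"
proof
  assume "\<forall>v\<in>cls (x, y, z). poly_eval d f v = 0"
  then show "poly_eval d f (x, y, z) = 0" using self_in_cls by blast
next
  assume h: "poly_eval d f (x, y, z) = 0"
  show "\<forall>v\<in>cls (x, y, z). poly_eval d f v = 0"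
  proof
    fix v assume "v \<in> cls (x, y, z)"
    then obtain c where "v = (c * x, c * y, c * z)" by (auto simp: cls_def)
    then show "poly_eval d f v = 0" using h by (simp add: poly_eval_hom)
  qed
qed

lemma num_points_Reps:
  "num_points d f = card {r \<in> Reps. poly_eval d f r = 0}"
proof -
  have "bij_betw cls {r \<in> Reps. poly_eval d f r = 0} {P \<in> proj_points. \<forall>v\<in>P. poly_eval d f v = 0}"
  proof (rule bij_betw_imageI)
    show "inj_on cls {r \<in> Reps. poly_eval d f r = 0}"
      by (rule inj_onI) (use cls_inj in blast)
    show "cls ` {r \<in> Reps. poly_eval d f r = 0} = {P \<in> proj_points. \<forall>v\<in>P. poly_eval d f v = 0}"
    proof
      show "cls ` {r \<in> Reps. poly_eval d f r = 0} \<subseteq> {P \<in> proj_points. \<forall>v\<in>P. poly_eval d f v = 0}"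
      proof
        fix P assume "P \<in> cls ` {r \<in> Reps. poly_eval d f r = 0}"
        then obtain r where r: "r \<in> Reps" "poly_eval d f r = 0" "P = cls r" by auto
        obtain x y z where rr: "r = (x, y, z)" by (cases r)
        have "P \<in> proj_points" unfolding proj_points_cls using r rr Reps_nz[OF r(1)] by blast
        moreover have "\<forall>v\<in>P. poly_eval d f v = 0" using r rr zero_on_cls by blast
        ultimately show "P \<in> {P \<in> proj_points. \<forall>v\<in>P. poly_eval d f v = 0}" by blast
      qed
      show "{P \<in> proj_points. \<forall>v\<in>P. poly_eval d f v = 0} \<subseteq> cls ` {r \<in> Reps. poly_eval d f r = 0}"
      proof
        fix P assume P: "P \<in> {P \<in> proj_points. \<forall>v\<in>P. poly_eval d f v = 0}"
        then obtain x y z where xyz: "P = cls (x, y, z)" "(x, y, z) \<noteq> (0, 0, 0)"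
          unfolding proj_points_cls by blast
        obtain r where r: "r \<in> Reps" "cls (x, y, z) = cls r" using normalize_rep[OF xyz(2)] by blast
        obtain a b c where rr: "r = (a, b, c)" by (cases r)
        have "poly_eval d f r = 0" using P xyz(1) r(2) rr zero_on_cls[of a b c d f] by auto
        then show "P \<in> cls ` {r \<in> Reps. poly_eval d f r = 0}" using r xyz(1) by blast
      qed
    qed
  qed
  then show ?thesis unfolding num_points_def by (simp add: bij_betw_same_card)
qed




lemma rhs_prob:
  fixes N :: nat and p :: real and n :: int
  assumes p: "p \<in> {0..1}"
  shows "measure_pmf.prob (Pi_pmf {1..N} False (\<lambda>_. bernoulli_pmf p))
           {B. (\<Sum>i\<in>{1..N}. (of_bool (B i) :: int)) = n}
       = (if n < 0 then 0 else real (N choose nat n) * p ^ nat n * (1 - p) ^ (N - nat n))"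
proof -
  let ?M = "Pi_pmf {1..N} False (\<lambda>_. bernoulli_pmf p)"
  let ?g = "\<lambda>B. card {i\<in>{1..N}. B i}"
  have bin: "binomial_pmf N p = map_pmf ?g ?M"
    by (rule binomial_pmf_altdef') (use p in auto)
  have set_eq: "{B. (\<Sum>i\<in>{1..N}. (of_bool (B i) :: int)) = n} = ?g -` {m. int m = n}"
  proof -
    have "(\<Sum>i\<in>{1..N}. (of_bool (B i) :: int)) = int (?g B)" for B
      by (simp add: Int_def conj_commute)
    then show ?thesis by auto
  qed
  have "measure_pmf.prob ?M {B. (\<Sum>i\<in>{1..N}. (of_bool (B i) :: int)) = n}
      = measure_pmf.prob (map_pmf ?g ?M) {m. int m = n}"
    unfolding set_eq by simp
  also have "\<dots> = measure_pmf.prob (binomial_pmf N p) {m. int m = n}" by (simp add: bin)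
  also have "\<dots> = (if n < 0 then 0 else real (N choose nat n) * p ^ nat n * (1 - p) ^ (N - nat n))"
  proof (cases "n < 0")
    case True
    then have "{m. int m = n} = {}" by auto
    then show ?thesis using True by simp
  next
    case False
    then have "{m. int m = n} = {nat n}" by auto
    then show ?thesis using False p by (simp add: measure_pmf_single)
  qed
  finally show ?thesis .
qed

lemma count_zero_pattern:
  fixes I :: "'b set"
  assumes "finite I"
  shows "card {w \<in> PiE I (\<lambda>_. UNIV :: 'a::{zero,finite} set). card {i\<in>I. w i = 0} = m}
       = (card I choose m) * (CARD('a) - 1) ^ (card I - m)"
proof -
  let ?B = "\<lambda>S i. if i \<in> S then {0::'a} else UNIV - {0}"
  let ?SS = "{S. S \<subseteq> I \<and> card S = m}"
  have eq: "{w \<in> PiE I (\<lambda>_. UNIV :: 'a set). card {i\<in>I. w i = 0} = m} = (\<Union>S\<in>?SS. PiE I (?B S))"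
  proof
    show "{w \<in> PiE I (\<lambda>_. UNIV :: 'a set). card {i\<in>I. w i = 0} = m} \<subseteq> (\<Union>S\<in>?SS. PiE I (?B S))"
    proof
      fix w assume w: "w \<in> {w \<in> PiE I (\<lambda>_. UNIV :: 'a set). card {i\<in>I. w i = 0} = m}"
      let ?S = "{i\<in>I. w i = 0}"
      have "?S \<in> ?SS" using w by auto
      moreover have "w \<in> PiE I (?B ?S)" using w by (auto simp: PiE_def Pi_def)
      ultimately show "w \<in> (\<Union>S\<in>?SS. PiE I (?B S))" by blast
    qed
    show "(\<Union>S\<in>?SS. PiE I (?B S)) \<subseteq> {w \<in> PiE I (\<lambda>_. UNIV :: 'a set). card {i\<in>I. w i = 0} = m}"
    proof
      fix w assume "w \<in> (\<Union>S\<in>?SS. PiE I (?B S))"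
      then obtain S where S: "S \<subseteq> I" "card S = m" "w \<in> PiE I (?B S)" by blast
      have "{i\<in>I. w i = 0} = S"
      proof
        show "{i\<in>I. w i = 0} \<subseteq> S"
        proof
          fix i assume "i \<in> {i\<in>I. w i = 0}"
          then have "i \<in> I" "w i = 0" by auto
          moreover have "w i \<in> ?B S i" using S(3) \<open>i \<in> I\<close> by (auto simp: PiE_def Pi_def)
          ultimately show "i \<in> S" by (auto split: if_splits)
        qed
        show "S \<subseteq> {i\<in>I. w i = 0}"
        proof
          fix i assume "i \<in> S"
          then have "i \<in> I" using S(1) by auto
          moreover have "w i \<in> ?B S i" using S(3) \<open>i \<in> I\<close> by (auto simp: PiE_def Pi_def)
          ultimately show "i \<in> {i\<in>I. w i = 0}" using \<open>i \<in> S\<close> by auto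
        qed
      qed
      then show "w \<in> {w \<in> PiE I (\<lambda>_. UNIV :: 'a set). card {i\<in>I. w i = 0} = m}"
        using S by (auto simp: PiE_def Pi_def)
    qed
  qed
  have fin_SS: "finite ?SS" using assms by (auto intro: finite_subset[of _ "Pow I"])
  have disj: "\<forall>S\<in>?SS. \<forall>T\<in>?SS. S \<noteq> T \<longrightarrow> PiE I (?B S) \<inter> PiE I (?B T) = {}"
  proof (intro ballI impI)
    fix S T assume S: "S \<in> ?SS" and T: "T \<in> ?SS" and ne: "S \<noteq> T"
    show "PiE I (?B S) \<inter> PiE I (?B T) = {}"
    proof (rule ccontr)
      assume "PiE I (?B S) \<inter> PiE I (?B T) \<noteq> {}"
      then obtain w where w1: "w \<in> PiE I (?B S)" and w2: "w \<in> PiE I (?B T)" by blast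
      from ne obtain i where i: "i \<in> S \<and> i \<notin> T \<or> i \<in> T \<and> i \<notin> S" by blast
      then have iI: "i \<in> I" using S T by auto
      have "w i \<in> ?B S i" "w i \<in> ?B T i" using w1 w2 iI by (auto simp: PiE_def Pi_def)
      then show False using i by (auto split: if_splits)
    qed
  qed
  have card_each: "card (PiE I (?B S)) = (CARD('a) - 1) ^ (card I - m)" if "S \<in> ?SS" for S
  proof -
    have SI: "S \<subseteq> I" "card S = m" using that by auto
    have "card (PiE I (?B S)) = (\<Prod>i\<in>I. card (?B S i))" by (rule card_PiE[OF assms])
    also have "\<dots> = (\<Prod>i\<in>I. if i \<in> S then 1 else CARD('a) - 1)"
      by (rule prod.cong) (auto simp: card_Diff_singleton)
    also have "\<dots> = (\<Prod>i\<in>I \<inter> {i. i \<in> S}. 1) * (\<Prod>i\<in>I \<inter> - {i. i \<in> S}. CARD('a) - 1)"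
      by (rule prod.If_cases[OF assms])
    also have "\<dots> = (CARD('a) - 1) ^ card (I - S)"
      by (simp add: Diff_eq)
    also have "card (I - S) = card I - m" using SI assms by (simp add: card_Diff_subset finite_subset)
    finally show ?thesis .
  qed
  have "card (\<Union>S\<in>?SS. PiE I (?B S)) = (\<Sum>S\<in>?SS. card (PiE I (?B S)))"
    by (rule card_UN_disjoint[OF fin_SS _ disj]) (use assms in \<open>auto intro: finite_PiE\<close>)
  also have "\<dots> = (\<Sum>S\<in>?SS. (CARD('a) - 1) ^ (card I - m))" by (rule sum.cong) (auto simp: card_each)
  also have "\<dots> = (card I choose m) * (CARD('a) - 1) ^ (card I - m)"
    using n_subsets[OF assms, of m] by simp
  finally show ?thesis unfolding eq .
qed




lemma card_Reps: "card (Reps :: ('a::{field,finite} \<times> 'a \<times> 'a) set) = CARD('a)^2 + CARD('a) + 1"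
proof -
  let ?A1 = "(\<lambda>(y,z). ((1::'a), y, z)) ` (UNIV :: ('a \<times> 'a) set)"
  let ?A2 = "(\<lambda>z. ((0::'a), (1::'a), z)) ` (UNIV :: 'a set)"
  have R: "(Reps :: ('a \<times> 'a \<times> 'a) set) = (?A1 \<union> ?A2) \<union> {(0,0,1)}"
    unfolding Reps_def by auto
  have c1: "card ?A1 = CARD('a) * CARD('a)"
  proof -
    have "inj_on (\<lambda>(y,z). ((1::'a), y, z)) (UNIV :: ('a \<times> 'a) set)" by (auto simp: inj_on_def)
    then have "card ?A1 = card (UNIV :: ('a \<times> 'a) set)" by (rule card_image)
    also have "\<dots> = CARD('a) * CARD('a)"
      by (simp add: UNIV_Times_UNIV[symmetric] card_cartesian_product del: UNIV_Times_UNIV)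
    finally show ?thesis .
  qed
  have c2: "card ?A2 = CARD('a)"
  proof -
    have "inj_on (\<lambda>z. ((0::'a), (1::'a), z)) (UNIV :: 'a set)" by (auto simp: inj_on_def)
    then show ?thesis by (simp add: card_image)
  qed
  have d12: "?A1 \<inter> ?A2 = {}" by auto
  have c12: "card (?A1 \<union> ?A2) = CARD('a) * CARD('a) + CARD('a)"
    using card_Un_disjoint[OF _ _ d12] c1 c2 by simp
  have d3: "(?A1 \<union> ?A2) \<inter> {(0,0,1)} = {}" by auto
  have "card ((?A1 \<union> ?A2) \<union> {(0,0,1)}) = card (?A1 \<union> ?A2) + card {((0::'a),(0::'a),(1::'a))}"
    by (rule card_Un_disjoint[OF _ _ d3]) auto
  then show ?thesis unfolding R using c12 by (simp add: power2_eq_square)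
qed

lemma pe_sum:
  "poly_eval d (\<lambda>m. \<Sum>r\<in>R. w r * g r m) v = (\<Sum>r\<in>R. w r * poly_eval d (g r) v)"
  by (simp add: poly_eval_alt sum_distrib_left sum_distrib_right ac_simps sum.swap[of _ R])

lemma pe_add: "poly_eval d (\<lambda>m. f m + g m) v = poly_eval d f v + poly_eval d g v"
  by (simp add: poly_eval_alt sum.distrib algebra_simps)

lemma pe_diff: "poly_eval d (\<lambda>m. f m - g m) v = poly_eval d f v - poly_eval d g v"
  by (simp add: poly_eval_alt sum_subtractf algebra_simps)

lemma pe_zero: "poly_eval d (\<lambda>m. 0) v = 0"
  by (simp add: poly_eval_alt)

lemma hom_add: "f \<in> hom_polys d \<Longrightarrow> g \<in> hom_polys d \<Longrightarrow> (\<lambda>m. f m + g m) \<in> hom_polys d"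
  unfolding hom_polys_def
proof (intro CollectI allI impI)
  fix m assume f: "f \<in> {f. \<forall>m. f m \<noteq> 0 \<longrightarrow> m \<in> deg_monos d}" and g: "g \<in> {f. \<forall>m. f m \<noteq> 0 \<longrightarrow> m \<in> deg_monos d}"
    and "f m + g m \<noteq> 0"
  then have "f m \<noteq> 0 \<or> g m \<noteq> 0" by auto
  then show "m \<in> deg_monos d" using f g by blast
qed

lemma hom_diff: "f \<in> hom_polys d \<Longrightarrow> g \<in> hom_polys d \<Longrightarrow> (\<lambda>m. f m - g m) \<in> hom_polys d"
  unfolding hom_polys_def
proof (intro CollectI allI impI)
  fix m assume f: "f \<in> {f. \<forall>m. f m \<noteq> 0 \<longrightarrow> m \<in> deg_monos d}" and g: "g \<in> {f. \<forall>m. f m \<noteq> 0 \<longrightarrow> m \<in> deg_monos d}"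
    and "f m - g m \<noteq> 0"
  then have "f m \<noteq> 0 \<or> g m \<noteq> 0" by auto
  then show "m \<in> deg_monos d" using f g by blast
qed

lemma hom_sum: "(\<And>r. r \<in> R \<Longrightarrow> g r \<in> hom_polys d) \<Longrightarrow> (\<lambda>m. \<Sum>r\<in>R. w r * g r m) \<in> hom_polys d"
  unfolding hom_polys_def
proof (intro CollectI allI impI)
  fix m assume g: "\<And>r. r \<in> R \<Longrightarrow> g r \<in> {f. \<forall>m. f m \<noteq> 0 \<longrightarrow> m \<in> deg_monos d}"
    and "(\<Sum>r\<in>R. w r * g r m) \<noteq> 0"
  then obtain r where r: "r \<in> R" "w r * g r m \<noteq> 0" by (meson sum.neutral)
  then have "g r m \<noteq> 0" by auto
  then show "m \<in> deg_monos d" using g[OF r(1)] by blast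
qed

lemma hom_zero: "(\<lambda>m. 0) \<in> hom_polys d"
  by (simp add: hom_polys_def)

lemma finite_hom: "finite (hom_polys d :: ((nat \<times> nat \<times> nat) \<Rightarrow> 'a::{field,finite}) set)"
proof -
  have "(hom_polys d :: ((nat \<times> nat \<times> nat) \<Rightarrow> 'a) set) = PiE_dflt (deg_monos d) 0 (\<lambda>_. UNIV)"
    by (auto simp: hom_polys_def PiE_dflt_def)
  then show ?thesis using finite_deg_monos by auto
qed




theorem proposition3p3:
  fixes d :: nat and n :: int
  assumes "d \<ge> 2 * CARD('a::{field,finite}) - 1"
  shows "real (card {f \<in> (hom_polys d :: ((nat \<times> nat \<times> nat) \<Rightarrow> 'a) set). int (num_points d f) = n})
           / real (card (hom_polys d :: ((nat \<times> nat \<times> nat) \<Rightarrow> 'a) set))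
         = measure_pmf.prob
             (Pi_pmf {1..CARD('a)^2 + CARD('a) + 1} False
                (\<lambda>_. bernoulli_pmf (1 / real CARD('a))))
             {B. (\<Sum>i\<in>{1..CARD('a)^2 + CARD('a) + 1}. (of_bool (B i) :: int)) = n}"
proof -
  define q where "q = CARD('a)"
  define N where "N = q^2 + q + 1"
  define e where "e = d - 2 * (CARD('a) - 1)"
  define H where "H = (hom_polys d :: ((nat \<times> nat \<times> nat) \<Rightarrow> 'a) set)"
  define R where "R = (Reps :: ('a \<times> 'a \<times> 'a) set)"
  define fib where "fib w = {f \<in> H. \<forall>r\<in>R. poly_eval d f r = w r}" for w
  define K where "K = fib (\<lambda>_. 0)"
  define PE where "PE = PiE R (\<lambda>_. UNIV :: 'a set)"
  have q2: "q \<ge> 2" unfolding q_def by (rule card_ge2)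
  have e1: "e \<ge> 1" unfolding e_def using assms card_ge2[where 'a='a] by linarith
  have finR: "finite R" unfolding R_def by simp
  have cardR: "card R = N" unfolding R_def N_def q_def by (rule card_Reps)
  have finH: "finite H" unfolding H_def by (rule finite_hom)
  have finPE: "finite PE" unfolding PE_def using finR by (auto intro: finite_PiE)
  have cardPE: "card PE = q ^ N" unfolding PE_def using finR cardR
    by (simp add: card_PiE q_def)
  have "\<forall>r. \<exists>f. f \<in> H \<and> poly_eval d f = hdel e r"
  proof
    fix r :: "'a \<times> 'a \<times> 'a"
    have "hdel e r \<in> EV d" unfolding e_def by (rule hdel_EV[OF assms])
    then show "\<exists>f. f \<in> H \<and> poly_eval d f = hdel e r" unfolding EV_def H_def by auto
  qed
  then obtain \<delta> where \<delta>: "\<And>r. \<delta> r \<in> H" "\<And>r. poly_eval d (\<delta> r) = hdel e r"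
    by metis
  have surj: "\<exists>f\<in>H. \<forall>r\<in>R. poly_eval d f r = w r" for w
  proof
    let ?f = "\<lambda>m. \<Sum>r\<in>R. w r * \<delta> r m"
    show "?f \<in> H" unfolding H_def by (rule hom_sum) (use \<delta>(1) in \<open>simp add: H_def\<close>)
    show "\<forall>r\<in>R. poly_eval d ?f r = w r"
    proof
      fix r' assume r': "r' \<in> R"
      have "poly_eval d ?f r' = (\<Sum>r\<in>R. w r * hdel e r r')" by (simp add: pe_sum \<delta>(2))
      also have "\<dots> = (\<Sum>r\<in>R. if r = r' then w r else 0)"
        by (rule sum.cong) (use r' e1 in \<open>auto simp: hdel_val R_def\<close>)
      also have "\<dots> = w r'" using r' finR by (simp add: sum.delta')
      finally show "poly_eval d ?f r' = w r'" .
    qed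
  qed
  have card_fib: "card (fib w) = card K" for w
  proof -
    obtain g where g: "g \<in> H" "\<forall>r\<in>R. poly_eval d g r = w r" using surj by blast
    have "bij_betw (\<lambda>k m. k m + g m) K (fib w)"
    proof (rule bij_betwI[where g = "\<lambda>f m. f m - g m"])
      show "(\<lambda>k m. k m + g m) \<in> K \<rightarrow> fib w"
        using g unfolding K_def fib_def H_def by (auto simp: pe_add intro: hom_add)
      show "(\<lambda>f m. f m - g m) \<in> fib w \<rightarrow> K"
        using g unfolding K_def fib_def H_def by (auto simp: pe_diff intro: hom_diff)
    qed auto
    then show ?thesis by (simp add: bij_betw_same_card)
  qed
  have K0: "(\<lambda>m. 0) \<in> K" unfolding K_def fib_def H_def by (simp add: hom_zero pe_zero)
  have finK: "finite K" unfolding K_def fib_def using finH by auto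
  have Kpos: "card K > 0" using K0 finK by (auto simp: card_gt_0_iff)
  have card_U: "card (\<Union>w\<in>W. fib w) = card W * card K" if W: "W \<subseteq> PE" for W
  proof -
    have finW: "finite W" using W finPE by (rule finite_subset)
    have "card (\<Union>w\<in>W. fib w) = (\<Sum>w\<in>W. card (fib w))"
    proof (rule card_UN_disjoint[OF finW])
      show "\<forall>w\<in>W. finite (fib w)" unfolding fib_def using finH by auto
      show "\<forall>w1\<in>W. \<forall>w2\<in>W. w1 \<noteq> w2 \<longrightarrow> fib w1 \<inter> fib w2 = {}"
      proof (intro ballI impI)
        fix w1 w2 assume w1: "w1 \<in> W" and w2: "w2 \<in> W" and ne: "w1 \<noteq> w2"
        show "fib w1 \<inter> fib w2 = {}"
        proof (rule ccontr)
          assume "fib w1 \<inter> fib w2 \<noteq> {}"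
          then obtain f where "f \<in> fib w1" "f \<in> fib w2" by blast
          then have eqw: "\<And>r. r \<in> R \<Longrightarrow> w1 r = w2 r" unfolding fib_def by auto
          have p1: "w1 \<in> PiE R (\<lambda>_. UNIV :: 'a set)" using w1 W unfolding PE_def by blast
          have p2: "w2 \<in> PiE R (\<lambda>_. UNIV :: 'a set)" using w2 W unfolding PE_def by blast
          have "w1 = w2" by (rule PiE_ext[OF p1 p2 eqw])
          then show False using ne by simp
        qed
      qed
    qed
    also have "\<dots> = card W * card K" by (simp add: card_fib)
    finally show ?thesis .
  qed
  have H_U: "H = (\<Union>w\<in>PE. fib w)"
  proof
    show "H \<subseteq> (\<Union>w\<in>PE. fib w)"
    proof
      fix f assume f: "f \<in> H"
      have "restrict (poly_eval d f) R \<in> PE" unfolding PE_def by simp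
      moreover have "f \<in> fib (restrict (poly_eval d f) R)" using f unfolding fib_def by simp
      ultimately show "f \<in> (\<Union>w\<in>PE. fib w)" by blast
    qed
    show "(\<Union>w\<in>PE. fib w) \<subseteq> H" unfolding fib_def by auto
  qed
  have cardH: "card H = q ^ N * card K" using card_U[of PE] H_U cardPE by simp
  define W where "W = {w \<in> PE. int (card {r\<in>R. w r = 0}) = n}"
  have T_U: "{f \<in> H. int (num_points d f) = n} = (\<Union>w\<in>W. fib w)"
  proof
    show "{f \<in> H. int (num_points d f) = n} \<subseteq> (\<Union>w\<in>W. fib w)"
    proof
      fix f assume f: "f \<in> {f \<in> H. int (num_points d f) = n}"
      let ?w = "restrict (poly_eval d f) R"
      have "{r\<in>R. ?w r = 0} = {r \<in> Reps. poly_eval d f r = 0}" unfolding R_def by auto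
      then have "?w \<in> W" using f unfolding W_def PE_def by (simp add: num_points_Reps)
      moreover have "f \<in> fib ?w" using f unfolding fib_def by simp
      ultimately show "f \<in> (\<Union>w\<in>W. fib w)" by blast
    qed
    show "(\<Union>w\<in>W. fib w) \<subseteq> {f \<in> H. int (num_points d f) = n}"
    proof
      fix f assume "f \<in> (\<Union>w\<in>W. fib w)"
      then obtain w where w: "w \<in> W" "f \<in> fib w" by blast
      have "{r \<in> Reps. poly_eval d f r = 0} = {r\<in>R. w r = 0}" using w(2) unfolding fib_def R_def by auto
      then show "f \<in> {f \<in> H. int (num_points d f) = n}"
        using w unfolding W_def fib_def by (simp add: num_points_Reps)
    qed
  qed
  have cardT: "card {f \<in> H. int (num_points d f) = n} = card W * card K"
    unfolding T_U by (rule card_U) (auto simp: W_def)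
  have lhs: "real (card {f \<in> H. int (num_points d f) = n}) / real (card H) = real (card W) / real q ^ N"
    using Kpos by (simp add: cardT cardH)
  have cardW: "real (card W) = (if n < 0 then 0 else real (N choose nat n) * real (q - 1) ^ (N - nat n))"
  proof (cases "n < 0")
    case True
    then have "W = {}" unfolding W_def by auto
    then show ?thesis using True by simp
  next
    case False
    then have "W = {w \<in> PiE R (\<lambda>_. UNIV :: 'a set). card {r\<in>R. w r = 0} = nat n}"
      unfolding W_def PE_def by auto
    then have "card W = (card R choose nat n) * (CARD('a) - 1) ^ (card R - nat n)"
      using count_zero_pattern[OF finR] by simp
    then show ?thesis using False cardR q2 by (simp add: q_def of_nat_diff)
  qed
  have rhs: "measure_pmf.prob (Pi_pmf {1..N} False (\<lambda>_. bernoulli_pmf (1 / real q)))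
             {B. (\<Sum>i\<in>{1..N}. (of_bool (B i) :: int)) = n}
        = (if n < 0 then 0 else real (N choose nat n) * (1 / real q) ^ nat n * (1 - 1 / real q) ^ (N - nat n))"
    by (rule rhs_prob) (use q2 in auto)
  have final: "real (card W) / real q ^ N
      = (if n < 0 then 0 else real (N choose nat n) * (1 / real q) ^ nat n * (1 - 1 / real q) ^ (N - nat n))"
  proof (cases "n < 0")
    case True then show ?thesis using cardW by simp
  next
    case False
    show ?thesis
    proof (cases "nat n \<le> N")
      case True
      have qpos: "real q > 0" using q2 by simp
      have "(1 - 1 / real q) ^ (N - nat n) = real (q - 1) ^ (N - nat n) / real q ^ (N - nat n)"
        using qpos q2 by (simp add: power_divide of_nat_diff field_simps)
      moreover have "real q ^ N = real q ^ nat n * real q ^ (N - nat n)"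
        using True by (simp add: power_add[symmetric])
      ultimately show ?thesis using False cardW qpos by (simp add: power_one_over field_simps)
    next
      case False2: False
      then have z: "N choose nat n = 0" by simp
      have "real (card W) = 0" using cardW False unfolding z by simp
      then show ?thesis using False unfolding z by simp
    qed
  qed
  show ?thesis
    using lhs rhs final unfolding H_def N_def q_def by simp
qed



end
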